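(* Let $f,g:2^{[n]}\to\mathbb N$ be monotone (decreasing) functions with $|f|\le|g|$. Then there is a function $p:2^{[n]}\times 2^{[n]}\to\mathbb N$ such that (i) $p(X,Y)\neq 0$ only if $X,Y\subset[n]$ are disjoint; (ii) $|p|=|f|$; (iii) $\sum_{X\subset[n]}p(X,Y)\le g(Y)$ for every $Y\subset[n]$, and $\sum_{Y\subset[n]}p(X,Y)=f(X)$ for every $X\subset[n]$.
   Context: $\mathbb N$ includes $0$; $[n]=\{1,\dots,n\}$. A function $f:2^{[n]}\to\mathbb N$ is monotone (decreasing) if $f(A)\le f(A\setminus\{i\})$ for every set $A\subset[n]$ and element $i$. For $f:2^{[n]}\to\mathbb N$, $|f|=\sum_{X\subset[n]}f(X)$; for $p:2^{[n]}\times2^{[n]}\to\mathbb N$, $|p|=\sum_{X,Y\subset[n]}p(X,Y)$. *)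

theory Defs
  imports Main
begin

text \<open>Functions 2^[n] -> N are modelled as nat set => nat; only values on
subsets of {1..n} matter.\<close>

definition monotone_dec :: "nat \<Rightarrow> (nat set \<Rightarrow> nat) \<Rightarrow> bool" where
  "monotone_dec n f \<longleftrightarrow> (\<forall>A i. A \<subseteq> {1..n} \<longrightarrow> f A \<le> f (A - {i}))"

definition norm1 :: "nat \<Rightarrow> (nat set \<Rightarrow> nat) \<Rightarrow> nat" where
  "norm1 n f = (\<Sum>X\<in>Pow {1..n}. f X)"

definition norm2 :: "nat \<Rightarrow> (nat set \<Rightarrow> nat set \<Rightarrow> nat) \<Rightarrow> nat" where
  "norm2 n p = (\<Sum>X\<in>Pow {1..n}. \<Sum>Y\<in>Pow {1..n}. p X Y)"

end

theory Submission
  imports Defs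
begin


lemma sum_upd_add:
  assumes "finite A" "x \<in> A"
  shows "sum (a(x := v)) A + (a x :: nat) = sum a A + v"
proof -
  have "sum (a(x := v)) A = v + sum (a(x:=v)) (A - {x})"
    using assms by (simp add: sum.remove)
  moreover have "sum a A = a x + sum a (A - {x})"
    using assms by (simp add: sum.remove)
  moreover have "sum (a(x:=v)) (A - {x}) = sum a (A - {x})"
    by (rule sum.cong) auto
  ultimately show ?thesis by simp
qed

lemma sum_upd_notin:
  assumes "x \<notin> A"
  shows "sum (a(x := v)) A = sum a A"
  using assms by (intro sum.cong) auto

lemma hall_weighted_aux:
  fixes a :: "'a \<Rightarrow> nat" and b :: "'b \<Rightarrow> nat"
  assumes "card S + sum a S = m" "finite S" "finite T"
    and "\<forall>A\<subseteq>S. sum a A \<le> sum b {t\<in>T. \<exists>s\<in>A. E s t}"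
  shows "\<exists>p. (\<forall>s t. p s t \<noteq> 0 \<longrightarrow> s \<in> S \<and> t \<in> T \<and> E s t) \<and>
     (\<forall>s\<in>S. sum (p s) T = a s) \<and> (\<forall>t\<in>T. (\<Sum>s\<in>S. p s t) \<le> b t)"
  using assms
proof (induction m arbitrary: S T a b rule: less_induct)
  case (less m S T a b)
  note hall = less.prems(4)
  define N where "N = (\<lambda>T' A. {t\<in>T'. \<exists>s\<in>A. E s t})"
  have hallN: "\<And>A. A \<subseteq> S \<Longrightarrow> sum a A \<le> sum b (N T A)" using hall N_def by auto
  show ?case
  proof (cases "\<exists>A. A \<subseteq> S \<and> A \<noteq> {} \<and> A \<noteq> S \<and> sum a A = sum b (N T A)")
    case True
    then obtain A where A: "A \<subseteq> S" "A \<noteq> {}" "A \<noteq> S" "sum a A = sum b (N T A)" by blast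
    have finA: "finite A" using A(1) less.prems(2) finite_subset by blast
    have finNA: "finite (N T A)" using less.prems(3) N_def by auto
    have cA: "card A < card S" using A less.prems(2) by (intro psubset_card_mono) auto
    have sA: "sum a A \<le> sum a S" using A(1) less.prems(2) by (simp add: sum_mono2)
    have "\<exists>p. (\<forall>s t. p s t \<noteq> 0 \<longrightarrow> s \<in> A \<and> t \<in> N T A \<and> E s t) \<and>
     (\<forall>s\<in>A. sum (p s) (N T A) = a s) \<and> (\<forall>t\<in>N T A. (\<Sum>s\<in>A. p s t) \<le> b t)"
    proof (rule less.IH[OF _ refl finA finNA])
      show "card A + sum a A < m" using cA sA less.prems(1) by linarith
      show "\<forall>B\<subseteq>A. sum a B \<le> sum b {t \<in> N T A. \<exists>s\<in>B. E s t}"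
      proof (intro allI impI)
        fix B assume B: "B \<subseteq> A"
        have "{t \<in> N T A. \<exists>s\<in>B. E s t} = N T B" using B unfolding N_def by auto
        thus "sum a B \<le> sum b {t \<in> N T A. \<exists>s\<in>B. E s t}" using hallN[of B] B A(1) by auto
      qed
    qed
    then obtain p1 where p1: "\<forall>s t. p1 s t \<noteq> 0 \<longrightarrow> s \<in> A \<and> t \<in> N T A \<and> E s t"
      "\<forall>s\<in>A. sum (p1 s) (N T A) = a s" "\<forall>t\<in>N T A. (\<Sum>s\<in>A. p1 s t) \<le> b t" by blast
    have finSA: "finite (S - A)" using less.prems(2) by auto
    have finTN: "finite (T - N T A)" using less.prems(3) by auto
    have "\<exists>p. (\<forall>s t. p s t \<noteq> 0 \<longrightarrow> s \<in> S - A \<and> t \<in> T - N T A \<and> E s t) \<and>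
     (\<forall>s\<in>S - A. sum (p s) (T - N T A) = a s) \<and> (\<forall>t\<in>T - N T A. (\<Sum>s\<in>S - A. p s t) \<le> b t)"
    proof (rule less.IH[OF _ refl finSA finTN])
      have "card (S - A) < card S" using A less.prems(2)
        by (intro psubset_card_mono) auto
      moreover have "sum a (S - A) \<le> sum a S" using less.prems(2) by (simp add: sum_mono2)
      ultimately show "card (S - A) + sum a (S - A) < m" using less.prems(1) by linarith
      show "\<forall>B\<subseteq>S - A. sum a B \<le> sum b {t \<in> T - N T A. \<exists>s\<in>B. E s t}"
      proof (intro allI impI)
        fix B assume B: "B \<subseteq> S - A"
        have finB: "finite B" using B finSA finite_subset by blast
        have "sum a (A \<union> B) = sum a A + sum a B" using B finA finB
          by (subst sum.union_disjoint) auto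
        moreover have "sum a (A \<union> B) \<le> sum b (N T (A \<union> B))" using hallN[of "A \<union> B"] A(1) B by auto
        moreover have "N T (A \<union> B) = N T A \<union> {t \<in> T - N T A. \<exists>s\<in>B. E s t}" unfolding N_def by auto
        moreover have "sum b (N T A \<union> {t \<in> T - N T A. \<exists>s\<in>B. E s t}) = sum b (N T A) + sum b {t \<in> T - N T A. \<exists>s\<in>B. E s t}"
          using finNA less.prems(3) by (subst sum.union_disjoint) auto
        ultimately show "sum a B \<le> sum b {t \<in> T - N T A. \<exists>s\<in>B. E s t}" using A(4) by simp
      qed
    qed
    then obtain p2 where p2: "\<forall>s t. p2 s t \<noteq> 0 \<longrightarrow> s \<in> S - A \<and> t \<in> T - N T A \<and> E s t"
      "\<forall>s\<in>S - A. sum (p2 s) (T - N T A) = a s" "\<forall>t\<in>T - N T A. (\<Sum>s\<in>S - A. p2 s t) \<le> b t" by blast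
    define p where "p = (\<lambda>s t. if s \<in> A then p1 s t else p2 s t)"
    have NT: "N T A \<subseteq> T" unfolding N_def by auto
    show ?thesis
    proof (intro exI conjI ballI allI impI)
      fix s t assume "p s t \<noteq> 0"
      thus "s \<in> S" "t \<in> T" "E s t" using p1(1) p2(1) A(1) NT unfolding p_def
        by (auto split: if_splits)
    next
      fix s assume s: "s \<in> S"
      show "sum (p s) T = a s"
      proof (cases "s \<in> A")
        case True
        have "sum (p s) T = sum (p1 s) T" unfolding p_def using True by simp
        also have "\<dots> = sum (p1 s) (N T A)"
          using NT less.prems(3) p1(1) by (intro sum.mono_neutral_right) auto
        finally show ?thesis using p1(2) True by simp
      next
        case False
        have "sum (p s) T = sum (p2 s) T" unfolding p_def using False by simp
        also have "\<dots> = sum (p2 s) (T - N T A)"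
          using less.prems(3) p2(1) by (intro sum.mono_neutral_right) auto
        finally show ?thesis using p2(2) False s by simp
      qed
    next
      fix t assume t: "t \<in> T"
      have split: "(\<Sum>s\<in>S. p s t) = (\<Sum>s\<in>A. p1 s t) + (\<Sum>s\<in>S - A. p2 s t)"
      proof -
        have "(\<Sum>s\<in>S. p s t) = (\<Sum>s\<in>A. p s t) + (\<Sum>s\<in>S - A. p s t)"
          using A(1) less.prems(2) by (metis sum.subset_diff add.commute)
        moreover have "(\<Sum>s\<in>A. p s t) = (\<Sum>s\<in>A. p1 s t)" unfolding p_def by simp
        moreover have "(\<Sum>s\<in>S - A. p s t) = (\<Sum>s\<in>S - A. p2 s t)" unfolding p_def by simp
        ultimately show ?thesis by simp
      qed
      show "(\<Sum>s\<in>S. p s t) \<le> b t"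
      proof (cases "t \<in> N T A")
        case True
        have "\<forall>s. p2 s t = 0" using p2(1) True by blast
        hence "(\<Sum>s\<in>S - A. p2 s t) = 0" by simp
        thus ?thesis using split p1(3) True by simp
      next
        case False
        have "\<forall>s. p1 s t = 0" using p1(1) False by blast
        hence "(\<Sum>s\<in>A. p1 s t) = 0" by simp
        thus ?thesis using split p2(3) False t by simp
      qed
    qed
  next
    case False
    have strict: "sum a A < sum b (N T A)" if "A \<subseteq> S" "A \<noteq> {}" "A \<noteq> S" for A
    proof -
      have "sum a A \<le> sum b (N T A)" using hallN that(1) .
      moreover have "sum a A \<noteq> sum b (N T A)" using False that by blast
      ultimately show ?thesis by simp
    qed
    show ?thesis
    proof (cases "\<forall>s\<in>S. a s = 0")
      case True
      show ?thesis by (rule exI[of _ "\<lambda>s t. 0"]) (use True in auto)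
    next
      case False
      then obtain s0 where s0: "s0 \<in> S" "a s0 > 0" by auto
      have "a s0 \<le> sum b (N T {s0})" using hallN[of "{s0}"] s0 by simp
      hence "sum b (N T {s0}) > 0" using s0 by linarith
      have "\<not> (\<forall>t\<in>N T {s0}. b t = 0)"
      proof
        assume "\<forall>t\<in>N T {s0}. b t = 0"
        hence "sum b (N T {s0}) = 0" by simp
        thus False using \<open>sum b (N T {s0}) > 0\<close> by simp
      qed
      then obtain t0 where t0: "t0 \<in> N T {s0}" "b t0 > 0" by auto
      have t0': "t0 \<in> T" "E s0 t0" using t0 unfolding N_def by auto
      define a' where "a' = a(s0 := a s0 - 1)"
      define b' where "b' = b(t0 := b t0 - 1)"
      have suma: "sum a' S + 1 = sum a S"
        using sum_upd_add[OF less.prems(2) s0(1), of a "a s0 - 1"] s0(2) unfolding a'_def by simp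
      have "\<exists>p. (\<forall>s t. p s t \<noteq> 0 \<longrightarrow> s \<in> S \<and> t \<in> T \<and> E s t) \<and>
        (\<forall>s\<in>S. sum (p s) T = a' s) \<and> (\<forall>t\<in>T. (\<Sum>s\<in>S. p s t) \<le> b' t)"
      proof (rule less.IH[OF _ refl less.prems(2,3)])
        show "card S + sum a' S < m" using suma less.prems(1) by linarith
        show "\<forall>A\<subseteq>S. sum a' A \<le> sum b' {t \<in> T. \<exists>s\<in>A. E s t}"
        proof (intro allI impI)
          fix A assume A: "A \<subseteq> S"
          have finA: "finite A" using A less.prems(2) finite_subset by blast
          have finN: "finite (N T A)" using less.prems(3) N_def by auto
          have "sum a' A \<le> sum b' (N T A)"
          proof (cases "t0 \<in> N T A")
            case False
            have "sum b' (N T A) = sum b (N T A)" unfolding b'_def using False by (rule sum_upd_notin)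
            moreover have "sum a' A \<le> sum a A" unfolding a'_def
              by (intro sum_mono) auto
            ultimately show ?thesis using hallN[OF A] by linarith
          next
            case True
            have hb: "sum b' (N T A) + b t0 = sum b (N T A) + (b t0 - 1)"
              unfolding b'_def by (rule sum_upd_add[OF finN True])
            show ?thesis
            proof (cases "s0 \<in> A")
              case True
              have "sum a' A + a s0 = sum a A + (a s0 - 1)"
                unfolding a'_def by (rule sum_upd_add[OF finA True])
              thus ?thesis using hb hallN[OF A] s0(2) t0(2) by linarith
            next
              case False
              have "sum a' A = sum a A" unfolding a'_def using False by (rule sum_upd_notin)
              moreover have "A \<noteq> S" using False s0(1) by blast
              moreover have "A = {} \<or> sum a A < sum b (N T A)"
                using strict[OF A] calculation(2) by blast
              ultimately show ?thesis using hb t0(2) by auto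
            qed
          qed
          thus "sum a' A \<le> sum b' {t \<in> T. \<exists>s\<in>A. E s t}" unfolding N_def by simp
        qed
      qed
      then obtain p' where p': "\<forall>s t. p' s t \<noteq> 0 \<longrightarrow> s \<in> S \<and> t \<in> T \<and> E s t"
        "\<forall>s\<in>S. sum (p' s) T = a' s" "\<forall>t\<in>T. (\<Sum>s\<in>S. p' s t) \<le> b' t" by blast
      define p where "p = (\<lambda>s t. p' s t + (if s = s0 \<and> t = t0 then 1 else 0))"
      show ?thesis
      proof (intro exI conjI ballI allI impI)
        fix s t assume "p s t \<noteq> 0"
        thus "s \<in> S" "t \<in> T" "E s t" using p'(1) s0(1) t0' unfolding p_def
          by (auto split: if_splits)
      next
        fix s assume s: "s \<in> S"
        have "sum (p s) T = sum (p' s) T + (\<Sum>t\<in>T. if s = s0 \<and> t = t0 then 1 else 0)"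
          unfolding p_def by (simp add: sum.distrib)
        also have "(\<Sum>t\<in>T. if s = s0 \<and> t = t0 then 1 else (0::nat)) = (if s = s0 then 1 else 0)"
          using t0'(1) less.prems(3) by (auto simp: sum.delta)
        finally show "sum (p s) T = a s" using p'(2) s s0(2) unfolding a'_def by auto
      next
        fix t assume t: "t \<in> T"
        have "(\<Sum>s\<in>S. p s t) = (\<Sum>s\<in>S. p' s t) + (\<Sum>s\<in>S. if s = s0 \<and> t = t0 then 1 else 0)"
          unfolding p_def by (simp add: sum.distrib)
        also have "(\<Sum>s\<in>S. if s = s0 \<and> t = t0 then 1 else (0::nat)) = (if t = t0 then 1 else 0)"
          using s0(1) less.prems(2) by (auto simp: sum.delta)
        finally show "(\<Sum>s\<in>S. p s t) \<le> b t" using p'(3) t t0(2) unfolding b'_def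
          by (auto split: if_splits)
      qed
    qed
  qed
qed



definition antimono_pow :: "nat set \<Rightarrow> (nat set \<Rightarrow> nat) \<Rightarrow> bool" where
  "antimono_pow I f \<longleftrightarrow> (\<forall>A B. A \<subseteq> B \<longrightarrow> B \<subseteq> I \<longrightarrow> f B \<le> f A)"

definition upset_pow :: "nat set \<Rightarrow> nat set set \<Rightarrow> bool" where
  "upset_pow I U \<longleftrightarrow> U \<subseteq> Pow I \<and> (\<forall>X Y. X \<in> U \<longrightarrow> X \<subseteq> Y \<longrightarrow> Y \<subseteq> I \<longrightarrow> Y \<in> U)"

lemma harris_arith:
  fixes k S0 S1 u0 u1 F0 F1 :: nat
  assumes "k * S0 \<le> u0 * F0" "k * S1 \<le> u1 * F1" "u0 \<le> u1" "F1 \<le> F0"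
  shows "2 * k * (S0 + S1) \<le> (u0 + u1) * (F0 + F1)"
proof -
  obtain d where d: "u1 = u0 + d" using assms(3) le_Suc_ex by blast
  obtain e where e: "F0 = F1 + e" using assms(4) le_Suc_ex by blast
  have "2 * k * (S0 + S1) = 2 * (k * S0) + 2 * (k * S1)" by (simp add: algebra_simps)
  also have "\<dots> \<le> 2 * (u0 * F0) + 2 * (u1 * F1)" using assms(1,2) by simp
  also have "\<dots> \<le> (u0 + u1) * (F0 + F1)" unfolding d e by (simp add: algebra_simps)
  finally show ?thesis .
qed

lemma harris:
  assumes "finite I" "antimono_pow I f" "upset_pow I U"
  shows "2 ^ card I * sum f U \<le> card U * sum f (Pow I)"
  using assms
proof (induction I arbitrary: f U rule: finite_induct)
  case empty
  have "U \<subseteq> {{}}" using empty.prems(2) unfolding upset_pow_def by auto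
  hence "U = {} \<or> U = {{}}" by blast
  thus ?case by auto
next
  case (insert x I)
  define U0 where "U0 = {X \<in> Pow I. X \<in> U}"
  define U1 where "U1 = {X \<in> Pow I. insert x X \<in> U}"
  define f1 where "f1 = (\<lambda>X. f (insert x X))"
  have Usub: "U \<subseteq> Pow (insert x I)" using insert.prems(2) unfolding upset_pow_def by auto
  have injI: "inj_on (insert x) (Pow I)"
  proof (rule inj_onI)
    fix A B assume AB: "A \<in> Pow I" "B \<in> Pow I" "insert x A = insert x B"
    hence "x \<notin> A" "x \<notin> B" using insert.hyps(2) by auto
    thus "A = B" using AB(3) by (metis Diff_insert_absorb)
  qed
  have UU: "U = U0 \<union> insert x ` U1"
  proof
    show "U \<subseteq> U0 \<union> insert x ` U1"
    proof
      fix X assume X: "X \<in> U"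
      show "X \<in> U0 \<union> insert x ` U1"
      proof (cases "x \<in> X")
        case True
        have "X - {x} \<in> U1" using X True Usub unfolding U1_def by (auto simp: insert_absorb)
        moreover have "X = insert x (X - {x})" using True by auto
        ultimately show ?thesis by blast
      next
        case False
        thus ?thesis using X Usub unfolding U0_def by auto
      qed
    qed
    show "U0 \<union> insert x ` U1 \<subseteq> U" unfolding U0_def U1_def by auto
  qed
  have disj: "U0 \<inter> insert x ` U1 = {}" using insert.hyps(2) unfolding U0_def by auto
  have finU0: "finite U0" "finite U1" using insert.hyps(1) unfolding U0_def U1_def by auto
  have injU1: "inj_on (insert x) U1" using injI unfolding U1_def by (rule inj_on_subset) auto
  have sumU: "sum f U = sum f U0 + sum f1 U1"
    unfolding UU f1_def using disj finU0 injU1 by (simp add: sum.union_disjoint sum.reindex)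
  have cardU: "card U = card U0 + card U1"
    unfolding UU using disj finU0 injU1 by (simp add: card_Un_disjoint card_image)
  have disjP: "Pow I \<inter> insert x ` Pow I = {}" using insert.hyps(2) by auto
  have sumP: "sum f (Pow (insert x I)) = sum f (Pow I) + sum f1 (Pow I)"
    unfolding Pow_insert f1_def using disjP insert.hyps(1) injI
    by (simp add: sum.union_disjoint sum.reindex)
  have am0: "antimono_pow I f" using insert.prems(1) unfolding antimono_pow_def by blast
  have am1: "antimono_pow I f1" using insert.prems(1) unfolding antimono_pow_def f1_def
    by (metis insert_mono subset_insertI)
  have up0: "upset_pow I U0" using insert.prems(2) unfolding upset_pow_def U0_def by blast
  have up1: "upset_pow I U1" using insert.prems(2) unfolding upset_pow_def U1_def
    by (metis (no_types, lifting) PowI insert_mono mem_Collect_eq subsetI)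
  have IH0: "2 ^ card I * sum f U0 \<le> card U0 * sum f (Pow I)" using insert.IH[OF am0 up0] .
  have IH1: "2 ^ card I * sum f1 U1 \<le> card U1 * sum f1 (Pow I)" using insert.IH[OF am1 up1] .
  have "U0 \<subseteq> U1" using insert.prems(2) unfolding upset_pow_def U0_def U1_def by blast
  hence c01: "card U0 \<le> card U1" using finU0 by (simp add: card_mono)
  have F10: "sum f1 (Pow I) \<le> sum f (Pow I)"
    using insert.prems(1) unfolding antimono_pow_def f1_def by (intro sum_mono) (meson PowD insert_mono subset_insertI)
  have "2 * 2 ^ card I * (sum f U0 + sum f1 U1) \<le> (card U0 + card U1) * (sum f (Pow I) + sum f1 (Pow I))"
    by (rule harris_arith[OF IH0 IH1 c01 F10])
  thus ?case using insert.hyps by (simp add: sumU cardU sumP)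
qed

lemma mono_dec_anti:
  assumes "monotone_dec n f" "finite D" "A \<union> D \<subseteq> {1..n}"
  shows "f (A \<union> D) \<le> f A"
  using assms(2,3)
proof (induction D rule: finite_induct)
  case empty
  then show ?case by simp
next
  case (insert i D)
  have IH: "f (A \<union> D) \<le> f A" using insert by auto
  show ?case
  proof (cases "i \<in> A")
    case True
    hence "A \<union> insert i D = A \<union> D" by auto
    thus ?thesis using IH by simp
  next
    case False
    have "f (A \<union> insert i D) \<le> f (A \<union> insert i D - {i})"
      using assms(1) insert.prems unfolding monotone_dec_def by blast
    moreover have "A \<union> insert i D - {i} = A \<union> D" using False insert.hyps(2) by auto
    ultimately show ?thesis using IH by simp
  qed
qed

lemma mono_dec_antimono_pow:
  assumes "monotone_dec n f"
  shows "antimono_pow {1..n} f"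
  unfolding antimono_pow_def
proof (intro allI impI)
  fix A B assume AB: "A \<subseteq> B" "B \<subseteq> {1..n}"
  have "finite (B - A)" using AB(2) finite_subset by blast
  moreover have "A \<union> (B - A) = B" using AB(1) by auto
  ultimately show "f B \<le> f A" using mono_dec_anti[OF assms, of "B - A" A] AB(2) by simp
qed

lemma final_arith:
  fixes K SfU F G u d u' SD SU' :: nat
  assumes "K * SfU \<le> u * F" "F \<le> G" "u = d" "K * SU' \<le> u' * G" "K = d + u'" "G = SD + SU'" "K > 0"
  shows "SfU \<le> SD"
proof -
  have "u * F \<le> d * G" using assms(2,3) by simp
  have "K * SU' = d * SU' + u' * SU'" using assms(5) by (simp add: algebra_simps)
  moreover have "u' * G = u' * SD + u' * SU'" using assms(6) by (simp add: algebra_simps)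
  ultimately have "d * SU' \<le> u' * SD" using assms(4) by linarith
  hence "d * G \<le> K * SD" using assms(5,6) by (simp add: algebra_simps)
  hence "K * SfU \<le> K * SD" using assms(1) \<open>u * F \<le> d * G\<close> by linarith
  thus ?thesis using assms(7) by simp
qed

theorem theorem2p1:
  fixes n :: nat and f g :: "nat set \<Rightarrow> nat"
  assumes "monotone_dec n f" and "monotone_dec n g"
    and "norm1 n f \<le> norm1 n g"
  shows "\<exists>p :: nat set \<Rightarrow> nat set \<Rightarrow> nat.
    (\<forall>X\<in>Pow {1..n}. \<forall>Y\<in>Pow {1..n}. p X Y \<noteq> 0 \<longrightarrow> X \<inter> Y = {}) \<and>
    norm2 n p = norm1 n f \<and>
    (\<forall>Y\<in>Pow {1..n}. (\<Sum>X\<in>Pow {1..n}. p X Y) \<le> g Y) \<and>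
    (\<forall>X\<in>Pow {1..n}. (\<Sum>Y\<in>Pow {1..n}. p X Y) = f X)"
proof -
  define I where "I = {1..n::nat}"
  have finI: "finite I" "card I = n" unfolding I_def by auto
  have finP: "finite (Pow I)" using finI by simp
  have cardP: "card (Pow I) = 2 ^ n" using finI by (simp add: card_Pow)
  have amf: "antimono_pow I f" using mono_dec_antimono_pow[OF assms(1)] unfolding I_def .
  have amg: "antimono_pow I g" using mono_dec_antimono_pow[OF assms(2)] unfolding I_def .
  have FG: "sum f (Pow I) \<le> sum g (Pow I)" using assms(3) unfolding norm1_def I_def .
  have hallc: "\<forall>\<A>\<subseteq>Pow I. sum f \<A> \<le> sum g {Y\<in>Pow I. \<exists>X\<in>\<A>. X \<inter> Y = {}}"
  proof (intro allI impI)
    fix \<A> assume A: "\<A> \<subseteq> Pow I"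
    define U where "U = {X \<in> Pow I. \<exists>A\<in>\<A>. A \<subseteq> X}"
    define D where "D = {Y\<in>Pow I. \<exists>X\<in>\<A>. X \<inter> Y = {}}"
    define U' where "U' = Pow I - D"
    have finU: "finite U" "finite D" "finite U'" using finP unfolding U_def D_def U'_def by auto
    have "\<A> \<subseteq> U" using A unfolding U_def by auto
    hence s1: "sum f \<A> \<le> sum f U" using finU by (intro sum_mono2) auto
    have upU: "upset_pow I U" unfolding upset_pow_def U_def by blast
    have DU: "D = (\<lambda>X. I - X) ` U"
    proof
      show "D \<subseteq> (\<lambda>X. I - X) ` U"
      proof
        fix Y assume "Y \<in> D"
        then obtain X where X: "X \<in> \<A>" "X \<inter> Y = {}" "Y \<subseteq> I" unfolding D_def by auto
        have "X \<subseteq> I - Y" using X A by blast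
        hence "I - Y \<in> U" using X(1) unfolding U_def by blast
        moreover have "Y = I - (I - Y)" using X(3) by auto
        ultimately show "Y \<in> (\<lambda>X. I - X) ` U" by blast
      qed
      show "(\<lambda>X. I - X) ` U \<subseteq> D" unfolding U_def D_def by auto
    qed
    have "inj_on (\<lambda>X. I - X) U" unfolding U_def by (rule inj_onI) auto
    hence cDU: "card D = card U" unfolding DU by (simp add: card_image)
    have upU': "upset_pow I U'" unfolding upset_pow_def
    proof (intro conjI allI impI)
      show "U' \<subseteq> Pow I" unfolding U'_def by blast
      fix X Y assume XY: "X \<in> U'" "X \<subseteq> Y" "Y \<subseteq> I"
      show "Y \<in> U'"
      proof (rule ccontr)
        assume "Y \<notin> U'"
        hence "Y \<in> D" using XY(3) unfolding U'_def by blast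
        then obtain Z where Z: "Z \<in> \<A>" "Z \<inter> Y = {}" unfolding D_def by blast
        have "Z \<inter> X = {}" using Z(2) XY(2) by blast
        hence "X \<in> D" using Z(1) XY(1) unfolding D_def U'_def by blast
        thus False using XY(1) unfolding U'_def by blast
      qed
    qed
    have h1: "2 ^ n * sum f U \<le> card U * sum f (Pow I)"
      using harris[OF finI(1) amf upU] finI(2) by simp
    have h2: "2 ^ n * sum g U' \<le> card U' * sum g (Pow I)"
      using harris[OF finI(1) amg upU'] finI(2) by simp
    have DsubP: "D \<subseteq> Pow I" unfolding D_def by auto
    have cK: "2 ^ n = card D + card U'"
      proof -
      have "card U' = card (Pow I) - card D" unfolding U'_def
        using finU(2) DsubP by (rule card_Diff_subset[OF _])
      moreover have "card D \<le> card (Pow I)" using finP DsubP by (rule card_mono)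
      ultimately show ?thesis using cardP by simp
    qed
    have sG: "sum g (Pow I) = sum g D + sum g U'"
      unfolding U'_def using sum.subset_diff[OF DsubP finP, of g] by simp
    have "sum f U \<le> sum g D"
      by (rule final_arith[OF h1 FG cDU[symmetric] h2 cK sG]) simp
    thus "sum f \<A> \<le> sum g {Y\<in>Pow I. \<exists>X\<in>\<A>. X \<inter> Y = {}}" using s1 unfolding D_def by linarith
  qed
  obtain p where p: "\<forall>s t. p s t \<noteq> 0 \<longrightarrow> s \<in> Pow I \<and> t \<in> Pow I \<and> s \<inter> t = {}"
     "\<forall>s\<in>Pow I. sum (p s) (Pow I) = f s" "\<forall>t\<in>Pow I. (\<Sum>s\<in>Pow I. p s t) \<le> g t"
    using hall_weighted_aux[OF refl finP finP hallc] by blast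
  have "norm2 n p = norm1 n f"
    unfolding norm2_def norm1_def I_def[symmetric] using p(2) by (intro sum.cong) auto
  thus ?thesis using p unfolding I_def[symmetric] by blast
qed

end
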